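(* Let $(G;+,\cdot)$ be a nonassociative right semiring, $n \geq 4$, and let $f, g \colon G^n \to G$ be affine functions over $(G;+,\cdot)$. If $f$ and $g$ are both linear, or if $(G;+,\cdot)$ is cancellative, then $\operatorname{deck} f = \operatorname{deck} g$ if and only if $f \equiv g$. In particular, the class of linear functions of arity at least $4$ over any nonassociative right semiring is weakly reconstructible, and if the semiring is cancellative, the class of affine functions of arity at least $4$ over it is weakly reconstructible.
   Context: A nonassociative right semiring is an algebra $(G;+,\cdot)$ such that $(G;+)$ is a commutative monoid with neutral element $0$; $(G;\cdot)$ is a groupoid (not necessarily associative) with right identity $1$; $(a+b)c = ac+bc$; and $a\cdot 0 = 0$. It is cancellative if $a+b=a+c$ implies $b=c$. A function $f\colon G^n\to G$ is affine if $f(x_1,\dots,x_n) = a_1x_1+\dots+a_nx_n+c$ for some $a_i,c\in G$; linear if this holds with $c=0$. Identification minor: for $f\colon A^n\to B$ and $I=\{i,j\}$, $i<j$, $f_I\colon A^{n-1}\to B$ is $f_I(x_1,\dots,x_{n-1}) = f(x_1,\dots,x_{j-1},x_i,x_j,\dots,x_{n-1})$. Two functions $f,g\colon A^n\to B$ are equivalent, $f\equiv g$, if $f(x_1,\dots,x_n) = g(x_{\sigma(1)},\dots,x_{\sigma(n)})$ for some permutation $\sigma$ of $\{1,\dots,n\}$. The deck of $f$ is the multiset $\langle f_I/{\equiv} : I \in \binom{[n]}{2}\rangle$ of equivalence classes of its $\binom n2$ identification minors. A class $\mathcal{C}$ of functions is weakly reconstructible if for every $f\in\mathcal{C}$, every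 $g \in \mathcal{C}$ of the same arity with $\operatorname{deck} g = \operatorname{deck} f$ satisfies $g \equiv f$. *)

theory Defs
  imports "HOL-Library.Multiset" "HOL-Combinatorics.Permutations"
begin

definition nars :: "('a \<Rightarrow> 'a \<Rightarrow> 'a) \<Rightarrow> ('a \<Rightarrow> 'a \<Rightarrow> 'a) \<Rightarrow> 'a \<Rightarrow> 'a \<Rightarrow> bool" where
  "nars add mul z e \<longleftrightarrow>
     (\<forall>a b c. add (add a b) c = add a (add b c)) \<and>
     (\<forall>a b. add a b = add b a) \<and>
     (\<forall>a. add a z = a) \<and>
     (\<forall>a. mul a e = a) \<and>
     (\<forall>a b c. mul (add a b) c = add (mul a c) (mul b c)) \<and>
     (\<forall>a. mul a z = z)"

definition cancellative :: "('a \<Rightarrow> 'a \<Rightarrow> 'a) \<Rightarrow> bool" where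
  "cancellative add \<longleftrightarrow> (\<forall>a b c. add a b = add a c \<longrightarrow> b = c)"

definition lsum :: "('a \<Rightarrow> 'a \<Rightarrow> 'a) \<Rightarrow> 'a \<Rightarrow> 'a list \<Rightarrow> 'a" where
  "lsum add z xs = foldr add xs z"

text \<open>n-ary functions G^n \<rightarrow> G are represented as functions on lists; only their
  values on lists of length n matter.\<close>
definition affine :: "('a \<Rightarrow> 'a \<Rightarrow> 'a) \<Rightarrow> ('a \<Rightarrow> 'a \<Rightarrow> 'a) \<Rightarrow> 'a \<Rightarrow> nat \<Rightarrow> ('a list \<Rightarrow> 'a) \<Rightarrow> bool" where
  "affine add mul z n f \<longleftrightarrow> (\<exists>a c. \<forall>xs. length xs = n \<longrightarrow>
      f xs = add (lsum add z (map (\<lambda>k. mul (a k) (xs ! k)) [0..<n])) c)"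

definition linear_fun :: "('a \<Rightarrow> 'a \<Rightarrow> 'a) \<Rightarrow> ('a \<Rightarrow> 'a \<Rightarrow> 'a) \<Rightarrow> 'a \<Rightarrow> nat \<Rightarrow> ('a list \<Rightarrow> 'a) \<Rightarrow> bool" where
  "linear_fun add mul z n f \<longleftrightarrow> (\<exists>a. \<forall>xs. length xs = n \<longrightarrow>
      f xs = lsum add z (map (\<lambda>k. mul (a k) (xs ! k)) [0..<n]))"

text \<open>Identification minor f_I for I = {i,j}, i < j (0-indexed):
  f_I(x_0..x_{n-2}) = f(x_0..x_{j-1}, x_i, x_j, ..., x_{n-2}).\<close>
definition minor :: "('a list \<Rightarrow> 'b) \<Rightarrow> nat \<Rightarrow> nat \<Rightarrow> 'a list \<Rightarrow> 'b" where
  "minor f i j xs = f (take j xs @ [xs ! i] @ drop j xs)"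

definition fequiv :: "nat \<Rightarrow> ('a list \<Rightarrow> 'b) \<Rightarrow> ('a list \<Rightarrow> 'b) \<Rightarrow> bool" where
  "fequiv n f g \<longleftrightarrow> (\<exists>\<sigma>. \<sigma> permutes {..<n} \<and>
      (\<forall>xs. length xs = n \<longrightarrow> f xs = g (map (\<lambda>i. xs ! \<sigma> i) [0..<n])))"

definition fclass :: "nat \<Rightarrow> ('a list \<Rightarrow> 'b) \<Rightarrow> ('a list \<Rightarrow> 'b) set" where
  "fclass n f = {h. fequiv n f h}"

definition deck :: "nat \<Rightarrow> ('a list \<Rightarrow> 'b) \<Rightarrow> ('a list \<Rightarrow> 'b) set multiset" where
  "deck n f = image_mset (\<lambda>(i, j). fclass (n - 1) (minor f i j))
                (mset_set {(i, j). i < j \<and> j < n})"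

end

theory Submission
  imports Defs
begin


locale NS =
  fixes add mul :: "'a \<Rightarrow> 'a \<Rightarrow> 'a" and z e :: 'a
  assumes N: "nars add mul z e"
begin

lemma assoc: "add (add a b) c = add a (add b c)" using N unfolding nars_def by blast
lemma comm: "add a b = add b a" using N unfolding nars_def by blast
lemma zr[simp]: "add a z = a" using N unfolding nars_def by blast
lemma zl[simp]: "add z a = a" using zr comm by metis
lemma mule[simp]: "mul a e = a" using N unfolding nars_def by blast
lemma distr: "mul (add a b) c = add (mul a c) (mul b c)" using N unfolding nars_def by blast
lemma mulz[simp]: "mul a z = z" using N unfolding nars_def by blast
lemma lcomm: "add a (add b c) = add b (add a c)" by (metis assoc comm)

lemma cfc: "comp_fun_commute add"
  by unfold_locales (auto simp: fun_eq_iff lcomm)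

definition F :: "'a multiset \<Rightarrow> 'a" where "F M = fold_mset add z M"

lemma F_empty[simp]: "F {#} = z"
  by (simp add: F_def)
lemma F_add_mset[simp]: "F (add_mset x M) = add x (F M)"
  unfolding F_def using comp_fun_commute.fold_mset_add_mset[OF cfc] .
lemma F_plus[simp]: "F (M + N) = add (F M) (F N)"
  by (induction N) (auto simp: lcomm)

lemma lsum_F: "lsum add z l = F (mset l)"
  by (induction l) (auto simp: lsum_def)

lemma F_zero: "(\<And>x. x \<in># M \<Longrightarrow> x = z) \<Longrightarrow> F M = z"
  by (induction M) auto

definition rep :: "nat \<Rightarrow> ('a list \<Rightarrow> 'a) \<Rightarrow> (nat \<Rightarrow> 'a) \<Rightarrow> 'a \<Rightarrow> bool" where
  "rep m h a c \<longleftrightarrow> (\<forall>xs. length xs = m \<longrightarrow>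
      h xs = add (F (image_mset (\<lambda>k. mul (a k) (xs ! k)) (mset_set {..<m}))) c)"

lemma lsum_upt: "lsum add z (map \<phi> [0..<m]) = F (image_mset \<phi> (mset_set {..<m}))"
  by (simp add: lsum_F atLeast0LessThan)

lemma affine_rep: "affine add mul z n f \<longleftrightarrow> (\<exists>a c. rep n f a c)"
  unfolding affine_def rep_def lsum_upt ..

lemma linear_rep: "linear_fun add mul z n f \<longleftrightarrow> (\<exists>a. rep n f a z)"
  unfolding linear_fun_def rep_def lsum_upt by simp

end

context NS begin

lemma img_reindex: "inj_on \<sigma> S \<Longrightarrow> image_mset \<phi> (mset_set (\<sigma> ` S)) = image_mset (\<phi> \<circ> \<sigma>) (mset_set S)"
  by (simp add: image_mset_mset_set[symmetric] image_mset.compositionality)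

lemma img_perm: "\<sigma> permutes S \<Longrightarrow> image_mset (\<phi> \<circ> \<sigma>) (mset_set S) = image_mset \<phi> (mset_set S)"
  by (metis img_reindex permutes_image permutes_inj_on)

lemma rep_zero: assumes "rep m h b d" shows "h (replicate m z) = d"
proof -
  have "F (image_mset (\<lambda>k. mul (b k) (replicate m z ! k)) (mset_set {..<m})) = z"
    by (rule F_zero) auto
  thus ?thesis using assms by (simp add: rep_def)
qed

lemma permutes_less: "\<sigma> permutes {..<n} \<Longrightarrow> i < n \<Longrightarrow> \<sigma> i < n"
  using permutes_in_image by fastforce

lemma rep_unit: assumes "rep m h b d" "k < m"
  shows "h ((replicate m z)[k := e]) = add (b k) d"
proof -
  have "{..<m} = insert k ({..<m} - {k})" using assms by auto
  hence ms: "mset_set {..<m} = add_mset k (mset_set ({..<m} - {k}))" by (metis finite_lessThan mset_set.insert Diff_iff finite_Diff singletonI)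
  have "F (image_mset (\<lambda>i. mul (b i) ((replicate m z)[k := e] ! i)) (mset_set ({..<m} - {k}))) = z"
    by (rule F_zero) (auto)
  thus ?thesis using assms unfolding rep_def by (auto simp: ms)
qed

lemma det: assumes "rep m h a c" "rep m h a' c'" "(c = z \<and> c' = z) \<or> cancellative add"
  shows "c = c' \<and> (\<forall>k<m. a k = a' k)"
proof -
  have cc: "c = c'" using rep_zero[OF assms(1)] rep_zero[OF assms(2)] by simp
  have "a k = a' k" if "k < m" for k
  proof -
    have "add (a k) c = add (a' k) c" using rep_unit[OF assms(1) that] rep_unit[OF assms(2) that] cc by simp
    thus ?thesis using assms(3) cc unfolding cancellative_def by (metis comm zr)
  qed
  thus ?thesis using cc by auto
qed

lemma feq_refl: "fequiv n h h"
  unfolding fequiv_def by (rule exI[of _ id]) (auto simp: permutes_id map_nth)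

lemma permlist_len[simp]: "length (map (\<lambda>i. xs ! \<sigma> i) [0..<n]) = n" by simp

lemma feq_sym: assumes "fequiv n h h'" shows "fequiv n h' h"
proof -
  obtain \<sigma> where s: "\<sigma> permutes {..<n}" "\<forall>xs. length xs = n \<longrightarrow> h xs = h' (map (\<lambda>i. xs ! \<sigma> i) [0..<n])"
    using assms unfolding fequiv_def by blast
  have "h' ys = h (map (\<lambda>i. ys ! inv \<sigma> i) [0..<n])" if "length ys = n" for ys
  proof -
    have "map (\<lambda>i. map (\<lambda>i. ys ! inv \<sigma> i) [0..<n] ! \<sigma> i) [0..<n] = ys"
      using that s(1) by (intro nth_equalityI) (auto simp: permutes_inverses permutes_less)
    thus ?thesis using s(2) that by simp
  qed
  thus ?thesis unfolding fequiv_def using permutes_inv[OF s(1)] by blast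
qed

lemma feq_trans: assumes "fequiv n h h'" "fequiv n h' h''" shows "fequiv n h h''"
proof -
  obtain \<sigma> where s: "\<sigma> permutes {..<n}" "\<forall>xs. length xs = n \<longrightarrow> h xs = h' (map (\<lambda>i. xs ! \<sigma> i) [0..<n])"
    using assms unfolding fequiv_def by blast
  obtain \<rho> where r: "\<rho> permutes {..<n}" "\<forall>xs. length xs = n \<longrightarrow> h' xs = h'' (map (\<lambda>i. xs ! \<rho> i) [0..<n])"
    using assms unfolding fequiv_def by blast
  have "h xs = h'' (map (\<lambda>i. xs ! (\<sigma> \<circ> \<rho>) i) [0..<n])" if "length xs = n" for xs
  proof -
    have "map (\<lambda>i. map (\<lambda>i. xs ! \<sigma> i) [0..<n] ! \<rho> i) [0..<n] = map (\<lambda>i. xs ! (\<sigma> \<circ> \<rho>) i) [0..<n]"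
      using r(1) by (intro nth_equalityI) (auto simp: permutes_less)
    note eq = this
    have "h xs = h' (map (\<lambda>i. xs ! \<sigma> i) [0..<n])" using s(2) that by simp
    also have "\<dots> = h'' (map (\<lambda>i. map (\<lambda>i. xs ! \<sigma> i) [0..<n] ! \<rho> i) [0..<n])" using r(2) by simp
    also have "\<dots> = h'' (map (\<lambda>i. xs ! (\<sigma> \<circ> \<rho>) i) [0..<n])" by (simp only: eq)
    finally show ?thesis .
  qed
  thus ?thesis unfolding fequiv_def using permutes_compose[OF r(1) s(1)] by blast
qed

lemma fclass_eq: "fequiv n h h' \<Longrightarrow> fclass n h = fclass n h'"
  unfolding fclass_def using feq_sym feq_trans by blast

lemma E1: assumes "fequiv m h h'" "rep m h' b d"
  shows "\<exists>\<sigma>. \<sigma> permutes {..<m} \<and> rep m h (b \<circ> inv \<sigma>) d"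
proof -
  obtain \<sigma> where s: "\<sigma> permutes {..<m}" "\<forall>xs. length xs = m \<longrightarrow> h xs = h' (map (\<lambda>i. xs ! \<sigma> i) [0..<m])"
    using assms unfolding fequiv_def by blast
  have "h xs = add (F (image_mset (\<lambda>k. mul ((b \<circ> inv \<sigma>) k) (xs ! k)) (mset_set {..<m}))) d"
    if "length xs = m" for xs
  proof -
    have "h xs = add (F (image_mset (\<lambda>k. mul (b k) (map (\<lambda>i. xs ! \<sigma> i) [0..<m] ! k)) (mset_set {..<m}))) d"
      using s(2) assms(2) that unfolding rep_def by simp
    also have "image_mset (\<lambda>k. mul (b k) (map (\<lambda>i. xs ! \<sigma> i) [0..<m] ! k)) (mset_set {..<m})
       = image_mset ((\<lambda>k. mul ((b \<circ> inv \<sigma>) k) (xs ! k)) \<circ> \<sigma>) (mset_set {..<m})"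
      by (rule image_mset_cong) (simp add: permutes_inverses(2)[OF s(1)])
    also have "\<dots> = image_mset (\<lambda>k. mul ((b \<circ> inv \<sigma>) k) (xs ! k)) (mset_set {..<m})"
      by (rule img_perm[OF s(1)])
    finally show ?thesis .
  qed
  thus ?thesis unfolding rep_def using s(1) by blast
qed

lemma E2: assumes "rep m h a c" "rep m h' b c"
    "image_mset a (mset_set {..<m}) = image_mset b (mset_set {..<m})"
  shows "fequiv m h h'"
proof -
  have "mset (map b [0..<m]) = mset (map a [0..<m])" using assms(3) by (simp add: atLeast0LessThan)
  then obtain p where p: "p permutes {..<length (map a [0..<m])}"
      "permute_list p (map a [0..<m]) = map b [0..<m]"
    by (rule mset_eq_permutation)
  have pm: "p permutes {..<m}" using p(1) by simp
  have ab: "a (p k) = b k" if "k < m" for k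
  proof -
    have "permute_list p (map a [0..<m]) ! k = map b [0..<m] ! k" using p(2) by simp
    thus ?thesis using permute_list_nth[OF p(1)] that permutes_less[OF pm that] by simp
  qed
  have "h xs = h' (map (\<lambda>i. xs ! p i) [0..<m])" if "length xs = m" for xs
  proof -
    have "h' (map (\<lambda>i. xs ! p i) [0..<m]) = add (F (image_mset (\<lambda>k. mul (b k) (map (\<lambda>i. xs ! p i) [0..<m] ! k)) (mset_set {..<m}))) c"
      using assms(2) unfolding rep_def by simp
    also have "image_mset (\<lambda>k. mul (b k) (map (\<lambda>i. xs ! p i) [0..<m] ! k)) (mset_set {..<m})
       = image_mset ((\<lambda>k. mul (a k) (xs ! k)) \<circ> p) (mset_set {..<m})"
      by (rule image_mset_cong) (simp add: ab)
    also have "\<dots> = image_mset (\<lambda>k. mul (a k) (xs ! k)) (mset_set {..<m})"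
      by (rule img_perm[OF pm])
    finally show ?thesis using assms(1) that unfolding rep_def by simp
  qed
  thus ?thesis unfolding fequiv_def using pm by blast
qed

end

context NS begin

lemma msplit: "finite S \<Longrightarrow> x \<in> S \<Longrightarrow> mset_set S = add_mset x (mset_set (S - {x}))"
  by (metis mset_set.remove)

definition cardP :: "(nat \<Rightarrow> 'a) \<Rightarrow> nat \<Rightarrow> nat \<Rightarrow> nat \<Rightarrow> 'a multiset" where
  "cardP a n i j = image_mset a (mset_set ({..<n} - {i,j})) + {#add (a i) (a j)#}"

definition mc :: "(nat \<Rightarrow> 'a) \<Rightarrow> nat \<Rightarrow> nat \<Rightarrow> nat \<Rightarrow> 'a" where
  "mc a i j = (\<lambda>m. if m = i then add (a i) (a j) else if m < j then a m else a (Suc m))"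

definition rho :: "nat \<Rightarrow> nat \<Rightarrow> nat" where "rho j m = (if m < j then m else Suc m)"

lemma rho_inj: "inj_on (rho j) S"
  unfolding rho_def inj_on_def by auto

lemma rho_img: assumes "i < j" "j < n" shows "rho j ` ({..<n-1} - {i}) = {..<n} - {i,j}"
proof
  show "rho j ` ({..<n - 1} - {i}) \<subseteq> {..<n} - {i, j}" using assms unfolding rho_def by auto
  show "{..<n} - {i, j} \<subseteq> rho j ` ({..<n - 1} - {i})"
  proof
    fix k assume k: "k \<in> {..<n} - {i, j}"
    show "k \<in> rho j ` ({..<n - 1} - {i})"
    proof (cases "k < j")
      case True thus ?thesis using k assms by (intro image_eqI[of _ _ k]) (auto simp: rho_def)
    next
      case False thus ?thesis using k assms by (intro image_eqI[of _ _ "k - 1"]) (auto simp: rho_def)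
    qed
  qed
qed

lemma mc_rho: "m \<noteq> i \<Longrightarrow> mc a i j m = a (rho j m)"
  unfolding mc_def rho_def by auto

lemma mc_img: assumes "i < j" "j < n"
  shows "image_mset (mc a i j) (mset_set {..<n-1}) = cardP a n i j"
proof -
  have "mset_set {..<n-1} = add_mset i (mset_set ({..<n-1} - {i}))" using assms by (intro msplit) auto
  moreover have "image_mset (mc a i j) (mset_set ({..<n-1} - {i})) = image_mset (a \<circ> rho j) (mset_set ({..<n-1} - {i}))"
    by (rule image_mset_cong) (simp add: mc_rho)
  moreover have "\<dots> = image_mset a (mset_set ({..<n} - {i,j}))"
    using img_reindex[of "rho j" "{..<n-1} - {i}" a, OF rho_inj] rho_img[OF assms] by simp
  ultimately show ?thesis unfolding cardP_def by (simp add: mc_def)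
qed

lemma minor_rep: assumes r: "rep n f a c" and ij: "i < j" "j < n"
  shows "rep (n-1) (minor f i j) (mc a i j) c"
  unfolding rep_def
proof (intro allI impI)
  fix xs :: "'a list" assume len: "length xs = n - 1"
  define L where "L = take j xs @ [xs ! i] @ drop j xs"
  have lenL: "length L = n" using len ij unfolding L_def by auto
  have Lrho: "L ! rho j m = xs ! m" if "m < n - 1" for m
    using that len ij unfolding L_def rho_def
    by (auto simp: nth_append min_def)
  have Li: "L ! i = xs ! i" using ij len unfolding L_def by (auto simp: nth_append)
  have Lj: "L ! j = xs ! i" using ij len unfolding L_def by (auto simp: nth_append)
  define \<phi> where "\<phi> k = mul (a k) (L ! k)" for k
  define \<psi> where "\<psi> m = mul (mc a i j m) (xs ! m)" for m
  have s1: "mset_set {..<n} = add_mset i (add_mset j (mset_set ({..<n} - {i,j})))"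
    using ij by (metis msplit finite_lessThan finite_Diff Diff_iff lessThan_iff insertI1 less_trans singletonD less_irrefl Diff_insert2)
  have s2: "mset_set {..<n-1} = add_mset i (mset_set ({..<n-1} - {i}))" using ij by (intro msplit) auto
  have s3: "image_mset \<psi> (mset_set ({..<n-1} - {i})) = image_mset (\<phi> \<circ> rho j) (mset_set ({..<n-1} - {i}))"
    by (rule image_mset_cong) (auto simp: \<psi>_def \<phi>_def mc_rho Lrho)
  have s4: "\<dots> = image_mset \<phi> (mset_set ({..<n} - {i,j}))"
    using img_reindex[of "rho j" "{..<n-1} - {i}" \<phi>, OF rho_inj] rho_img[OF ij] by simp
  have "minor f i j xs = f L" unfolding minor_def L_def ..
  also have "\<dots> = add (F (image_mset \<phi> (mset_set {..<n}))) c" using r lenL unfolding rep_def \<phi>_def by simp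
  also have "F (image_mset \<phi> (mset_set {..<n})) = add (\<phi> i) (add (\<phi> j) (F (image_mset \<phi> (mset_set ({..<n} - {i,j})))))"
    by (simp only: s1 image_mset_add_mset F_add_mset)
  also have "\<dots> = add (\<psi> i) (F (image_mset \<phi> (mset_set ({..<n} - {i,j}))))"
    by (simp add: \<psi>_def \<phi>_def mc_def distr Li Lj assoc)
  also have "\<dots> = F (image_mset \<psi> (mset_set {..<n-1}))"
    by (simp only: s2 s3 s4 image_mset_add_mset F_add_mset)
  finally show "minor f i j xs = add (F (image_mset (\<lambda>k. mul (mc a i j k) (xs ! k)) (mset_set {..<n - 1}))) c"
    unfolding \<psi>_def .
qed

end

context NS begin

definition lst :: "'a multiset \<Rightarrow> 'a list" where "lst M = (SOME l. mset l = M)"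

lemma mset_lst: "mset (lst M) = M"
  unfolding lst_def by (rule someI_ex) (rule ex_mset)

definition canon :: "nat \<Rightarrow> 'a multiset \<Rightarrow> 'a \<Rightarrow> 'a list \<Rightarrow> 'a" where
  "canon m M c = (\<lambda>xs. add (F (image_mset (\<lambda>k. mul (lst M ! k) (xs ! k)) (mset_set {..<m}))) c)"

lemma canon_rep: "rep m (canon m M c) (\<lambda>k. lst M ! k) c"
  unfolding rep_def canon_def by simp

lemma img_lst: assumes "size M = m" shows "image_mset (\<lambda>k. lst M ! k) (mset_set {..<m}) = M"
proof -
  have l: "length (lst M) = m" using assms mset_lst by (metis size_mset)
  have "image_mset (\<lambda>k. lst M ! k) (mset_set {..<m}) = mset (map (\<lambda>k. lst M ! k) [0..<length (lst M)])"
    using l by (simp add: atLeast0LessThan)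
  also have "\<dots> = M" by (simp add: map_nth mset_lst)
  finally show ?thesis .
qed

definition Phi :: "nat \<Rightarrow> 'a multiset \<Rightarrow> 'a \<Rightarrow> ('a list \<Rightarrow> 'a) set" where
  "Phi m M c = fclass m (canon m M c)"

definition Psi :: "nat \<Rightarrow> ('a list \<Rightarrow> 'a) set \<Rightarrow> 'a multiset \<times> 'a" where
  "Psi m K = (SOME p. \<exists>h a c. h \<in> K \<and> rep m h a c \<and> (c = z \<or> cancellative add) \<and>
      p = (image_mset a (mset_set {..<m}), c))"

lemma Psi_Phi: assumes "size M = m" "c = z \<or> cancellative add"
  shows "Psi m (Phi m M c) = (M, c)"
  unfolding Psi_def
proof (rule someI2)
  show "\<exists>h a c'. h \<in> Phi m M c \<and> rep m h a c' \<and> (c' = z \<or> cancellative add) \<and>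
      (M, c) = (image_mset a (mset_set {..<m}), c')"
    unfolding Phi_def fclass_def
    by (rule exI[of _ "canon m M c"], rule exI[of _ "\<lambda>k. lst M ! k"], rule exI[of _ c])
       (simp add: canon_rep img_lst[OF assms(1)] assms(2) feq_refl)
next
  fix p assume "\<exists>h a c'. h \<in> Phi m M c \<and> rep m h a c' \<and> (c' = z \<or> cancellative add) \<and>
      p = (image_mset a (mset_set {..<m}), c')"
  then obtain h a c' where h: "fequiv m (canon m M c) h" "rep m h a c'" "c' = z \<or> cancellative add"
     "p = (image_mset a (mset_set {..<m}), c')" unfolding Phi_def fclass_def by blast
  obtain \<sigma> where s: "\<sigma> permutes {..<m}" "rep m (canon m M c) (a \<circ> inv \<sigma>) c'" using E1[OF h(1,2)] by blast
  have d: "c = c' \<and> (\<forall>k<m. lst M ! k = (a \<circ> inv \<sigma>) k)"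
    using det[OF canon_rep s(2)] assms(2) h(3) by blast
  have "image_mset a (mset_set {..<m}) = image_mset (a \<circ> inv \<sigma>) (mset_set {..<m})"
    using img_perm[OF permutes_inv[OF s(1)], of a] by simp
  also have "\<dots> = image_mset (\<lambda>k. lst M ! k) (mset_set {..<m})"
    using d by (intro image_mset_cong) auto
  finally show "p = (M, c)" using h(4) d img_lst[OF assms(1)] by simp
qed

lemma size_cardP: "i < j \<Longrightarrow> j < n \<Longrightarrow> size (cardP a n i j) = n - 1"
  unfolding cardP_def by (simp add: card_Diff_subset) 

lemma class_minor: assumes "rep n f a c" "i < j" "j < n"
  shows "fclass (n-1) (minor f i j) = Phi (n-1) (cardP a n i j) c"
  unfolding Phi_def
  by (rule fclass_eq, rule E2[OF minor_rep[OF assms] canon_rep])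
     (subst mc_img[OF assms(2,3)], subst img_lst[OF size_cardP[OF assms(2,3)]], rule refl)

definition Pairs :: "nat \<Rightarrow> (nat \<times> nat) set" where "Pairs n = {(i,j). i < j \<and> j < n}"

lemma finite_Pairs[simp]: "finite (Pairs n)"
  by (rule finite_subset[of _ "{..<n} \<times> {..<n}"]) (auto simp: Pairs_def)

lemma deck_rep: assumes "rep n f a c"
  shows "deck n f = image_mset (\<lambda>p. Phi (n-1) (case p of (i,j) \<Rightarrow> cardP a n i j) c) (mset_set (Pairs n))"
  unfolding deck_def Pairs_def[symmetric]
proof (rule image_mset_cong)
  fix p assume "p \<in># mset_set (Pairs n)"
  hence "p \<in> Pairs n" by simp
  then obtain i j where p: "p = (i,j)" "i < j" "j < n" by (auto simp: Pairs_def)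
  show "(case p of (i, j) \<Rightarrow> fclass (n - 1) (minor f i j)) = Phi (n - 1) (case p of (i, j) \<Rightarrow> cardP a n i j) c"
    using class_minor[OF assms p(2,3)] p(1) by simp
qed

end

context NS begin

definition T2 :: "nat \<Rightarrow> nat set set" where "T2 n = {P. P \<subseteq> {..<n} \<and> card P = 2}"

lemma finite_T2[simp]: "finite (T2 n)"
  by (rule finite_subset[of _ "Pow {..<n}"]) (auto simp: T2_def)

definition psum :: "(nat \<Rightarrow> 'a) \<Rightarrow> nat set \<Rightarrow> 'a" where "psum a P = add (a (Min P)) (a (Max P))"

lemma psum2: "p \<noteq> q \<Longrightarrow> psum a {p,q} = add (a p) (a q)"
  unfolding psum_def by (cases "p < q") (auto simp: comm min_def max_def)

definition cardS :: "(nat \<Rightarrow> 'a) \<Rightarrow> nat \<Rightarrow> nat set \<Rightarrow> 'a multiset" where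
  "cardS a n P = image_mset a (mset_set ({..<n} - P)) + {#psum a P#}"

definition Ds :: "(nat \<Rightarrow> 'a) \<Rightarrow> nat \<Rightarrow> 'a multiset multiset" where
  "Ds a n = image_mset (cardS a n) (mset_set (T2 n))"

definition Dp :: "(nat \<Rightarrow> 'a) \<Rightarrow> nat \<Rightarrow> 'a multiset multiset" where
  "Dp a n = image_mset (\<lambda>p. case p of (i,j) \<Rightarrow> cardP a n i j) (mset_set (Pairs n))"

lemma T2_2: "P \<in> T2 n \<Longrightarrow> \<exists>p q. P = {p,q} \<and> p < q \<and> q < n"
proof -
  assume "P \<in> T2 n"
  then obtain x y where xy: "P = {x,y}" "x \<noteq> y" "P \<subseteq> {..<n}" unfolding T2_def by (auto simp: card_2_iff)
  show ?thesis
  proof (cases "x < y")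
    case True thus ?thesis using xy by blast
  next
    case False hence "y < x" using xy by simp
    thus ?thesis using xy by (intro exI[of _ y] exI[of _ x]) auto
  qed
qed

lemma Dp_Ds: "Dp a n = Ds a n"
proof -
  define toS where "toS = (\<lambda>p :: nat \<times> nat. {fst p, snd p})"
  have inj: "inj_on toS (Pairs n)"
    unfolding inj_on_def toS_def Pairs_def by (auto simp: doubleton_eq_iff)
  have img: "toS ` Pairs n = T2 n"
  proof
    show "toS ` Pairs n \<subseteq> T2 n" unfolding toS_def Pairs_def T2_def by auto
    show "T2 n \<subseteq> toS ` Pairs n"
    proof
      fix P assume "P \<in> T2 n"
      then obtain p q where "P = {p,q}" "p < q" "q < n" using T2_2 by blast
      thus "P \<in> toS ` Pairs n" unfolding toS_def Pairs_def by (intro image_eqI[of _ _ "(p,q)"]) auto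
    qed
  qed
  have "Dp a n = image_mset (cardS a n \<circ> toS) (mset_set (Pairs n))"
    unfolding Dp_def
  proof (rule image_mset_cong)
    fix p assume "p \<in># mset_set (Pairs n)"
    hence "p \<in> Pairs n" by simp
    then obtain i j where p: "p = (i,j)" "i < j" by (auto simp: Pairs_def)
    show "(case p of (i, j) \<Rightarrow> cardP a n i j) = (cardS a n \<circ> toS) p"
      using p by (simp add: toS_def cardP_def cardS_def psum2)
  qed
  also have "\<dots> = Ds a n" unfolding Ds_def
    by (simp add: image_mset.compositionality[symmetric] image_mset_mset_set[OF inj] img)
  finally show ?thesis .
qed

lemma Ds_perm: assumes t: "\<tau> permutes {..<n}" shows "Ds (a \<circ> \<tau>) n = Ds a n"
proof -
  have injA: "inj_on \<tau> A" for A using permutes_inj[OF t] by (metis inj_on_subset subset_UNIV)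
  have injB: "inj_on (inv \<tau>) A" for A using permutes_inj[OF permutes_inv[OF t]] by (metis inj_on_subset subset_UNIV)
  have inj: "inj_on ((`) \<tau>) (T2 n)"
    unfolding inj_on_def using inj_image_eq_iff[OF permutes_inj[OF t]] by blast
  have img: "((`) \<tau>) ` T2 n = T2 n"
  proof
    show "(`) \<tau> ` T2 n \<subseteq> T2 n" unfolding T2_def
      using permutes_image[OF t] by (auto simp: card_image injA)
    show "T2 n \<subseteq> (`) \<tau> ` T2 n"
    proof
      fix P assume P: "P \<in> T2 n"
      have "inv \<tau> ` P \<in> T2 n"
        using P permutes_image[OF permutes_inv[OF t]] unfolding T2_def
        by (auto simp: card_image injB)
      moreover have "\<tau> ` (inv \<tau> ` P) = P" using permutes_surj[OF t] by (simp add: image_comp surj_iff)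
      ultimately show "P \<in> (`) \<tau> ` T2 n" by blast
    qed
  qed
  have c: "cardS (a \<circ> \<tau>) n P = cardS a n (\<tau> ` P)" if P: "P \<in> T2 n" for P
  proof -
    obtain p q where pq: "P = {p,q}" "p < q" "q < n" using T2_2[OF P] by blast
    have ne: "\<tau> p \<noteq> \<tau> q" using permutes_inj[OF t] pq by (metis inj_eq less_irrefl)
    have ps: "psum (a \<circ> \<tau>) P = psum a (\<tau> ` P)" using pq ne by (simp add: psum2)
    have "\<tau> ` ({..<n} - P) = {..<n} - \<tau> ` P"
      using permutes_image[OF t] permutes_inj[OF t] by (simp add: image_set_diff)
    hence "image_mset (a \<circ> \<tau>) (mset_set ({..<n} - P)) = image_mset a (mset_set ({..<n} - \<tau> ` P))"
      using img_reindex[of \<tau> "{..<n} - P" a] injA by simp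
    thus ?thesis unfolding cardS_def using ps by simp
  qed
  have "Ds (a \<circ> \<tau>) n = image_mset (cardS a n \<circ> (`) \<tau>) (mset_set (T2 n))"
    unfolding Ds_def by (rule image_mset_cong) (simp add: c)
  also have "\<dots> = Ds a n" unfolding Ds_def
    by (simp add: image_mset.compositionality[symmetric] image_mset_mset_set[OF inj] img)
  finally show ?thesis .
qed

end

lemma two_choose: "2 * (k choose 2) = k * (k - 1)"
proof (induction k)
  case (Suc k)
  have "Suc k choose 2 = (k choose 2) + k" by (simp add: numeral_2_eq_2)
  thus ?case using Suc by (cases k) (auto simp: algebra_simps)
qed simp

lemma arith_key: fixes n r :: nat
  assumes "4 \<le> n" "1 \<le> r" "r \<le> n" "((n-1) choose 2) * r \<le> (n choose 2) - ((n-r) choose 2)"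
  shows "n = 4 \<and> r = 1"
proof -
  obtain m where m: "n = m + r" using assms(3) by (metis le_add_diff_inverse2)
  have nm: "n - r = m" using m by simp
  obtain s where s: "r = Suc s" using assms(2) by (cases r) auto
  have E: "(m + r) * (m + r - 1) + r * r = m * (m - 1) + 2 * (r * (m + r - 1)) + r"
    unfolding s by (cases m) (simp_all add: algebra_simps)
  have "r \<le> r * r" using assms(2) by simp
  hence "(m + r) * (m + r - 1) \<le> m * (m - 1) + 2 * (r * (m + r - 1))" using E by linarith
  hence A: "2 * (n choose 2) \<le> 2 * (m choose 2) + 2 * (r * (n - 1))"
    unfolding two_choose m .
  hence B: "(n choose 2) - (m choose 2) \<le> r * (n - 1)" by linarith
  have C: "((n-1) choose 2) * r \<le> r * (n - 1)" using assms(4) B unfolding nm by linarith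
  hence "((n-1) choose 2) \<le> n - 1" using assms(2) by (simp add: mult.commute)
  hence "2 * ((n-1) choose 2) \<le> 2 * (n - 1)" by linarith
  hence D0: "(n - 1) * (n - 1 - 1) \<le> 2 * (n - 1)" unfolding two_choose .
  have "n - 1 - 1 = n - 2" by simp
  hence D: "(n - 1) * (n - 2) \<le> 2 * (n - 1)" using D0 by (simp only:)
  have "n \<le> 4"
  proof (rule ccontr)
    assume "\<not> n \<le> 4" hence "n - 2 \<ge> 3" by linarith
    hence "(n - 1) * 3 \<le> (n - 1) * (n - 2)" by (rule mult_le_mono2)
    with D assms(1) show False by linarith
  qed
  hence n4: "n = 4" using assms(1) by linarith
  have "r = 1 \<or> r = 2 \<or> r = 3 \<or> r = 4" using assms(2,3) n4 by linarith
  thus ?thesis using assms(4) n4 by (auto simp: choose_two)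
qed

lemma count_sum_mset_img: "count (sum_mset (image_mset g M)) k = sum_mset (image_mset (\<lambda>x. count (g x) k) M)"
  by (induction M) auto
lemma sum_mset_singletons: "sum_mset (image_mset (\<lambda>x. {#f x#}) M) = image_mset f M"
  by (induction M) auto
lemma image_sum_mset: "image_mset f (sum_mset (image_mset g M)) = sum_mset (image_mset (\<lambda>x. image_mset f (g x)) M)"
  by (induction M) auto
lemma image_repeat: "image_mset f (repeat_mset N M) = repeat_mset N (image_mset f M)"
  by (induction N) auto
lemma sum_plus: "sum_mset (image_mset (\<lambda>x. g x + h x) M) = sum_mset (image_mset g M) + sum_mset (image_mset h M)"
  by (induction M) (auto simp: algebra_simps)
lemma subset_size_eq: "A \<subseteq># B \<Longrightarrow> size A = size B \<Longrightarrow> A = B"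
  by (metis mset_subset_size subset_mset.le_less less_irrefl)

context NS begin

lemma sum_mset_set_diff: "sum_mset (image_mset (\<lambda>P. mset_set ({..<n} - P)) (mset_set (T2 n)))
   = repeat_mset ((n-1) choose 2) (mset_set {..<n})"
proof (rule multiset_eqI)
  fix k
  have "count (sum_mset (image_mset (\<lambda>P. mset_set ({..<n} - P)) (mset_set (T2 n)))) k
      = sum (\<lambda>P. count (mset_set ({..<n} - P)) k) (T2 n)"
    by (simp add: count_sum_mset_img sum_unfold_sum_mset)
  also have "\<dots> = sum (\<lambda>P. if k \<in> {..<n} - P then 1 else 0) (T2 n)"
    by (rule sum.cong) (auto simp: count_mset_set')
  also have "\<dots> = card {P \<in> T2 n. k \<in> {..<n} - P}"
    by (simp add: sum.If_cases Int_def)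
  also have "\<dots> = count (repeat_mset ((n-1) choose 2) (mset_set {..<n})) k"
  proof (cases "k < n")
    case True
    have "{P \<in> T2 n. k \<in> {..<n} - P} = {P. P \<subseteq> {..<n} - {k} \<and> card P = 2}"
      using True unfolding T2_def by auto
    moreover have "card ({..<n} - {k}) = n - 1" using True by simp
    ultimately show ?thesis using True by (simp add: n_subsets)
  next
    case False thus ?thesis by simp
  qed
  finally show "count (sum_mset (image_mset (\<lambda>P. mset_set ({..<n} - P)) (mset_set (T2 n)))) k =
        count (repeat_mset ((n-1) choose 2) (mset_set {..<n})) k" .
qed

lemma FM: "sum_mset (Ds a n) = repeat_mset ((n-1) choose 2) (image_mset a (mset_set {..<n}))
     + image_mset (psum a) (mset_set (T2 n))"
proof -
  have "sum_mset (Ds a n) = sum_mset (image_mset (\<lambda>P. image_mset a (mset_set ({..<n} - P)) + {#psum a P#}) (mset_set (T2 n)))"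
    unfolding Ds_def cardS_def ..
  also have "\<dots> = sum_mset (image_mset (\<lambda>P. image_mset a (mset_set ({..<n} - P))) (mset_set (T2 n)))
      + sum_mset (image_mset (\<lambda>P. {#psum a P#}) (mset_set (T2 n)))"
    by (rule sum_plus)
  also have "sum_mset (image_mset (\<lambda>P. image_mset a (mset_set ({..<n} - P))) (mset_set (T2 n)))
     = image_mset a (repeat_mset ((n-1) choose 2) (mset_set {..<n}))"
    by (simp add: image_sum_mset[symmetric] sum_mset_set_diff)
  finally show ?thesis by (simp add: sum_mset_singletons image_repeat)
qed

lemma card_T2: "card (T2 n) = n choose 2"
  unfolding T2_def using n_subsets[of "{..<n}" 2] by simp

lemma key: assumes n4: "4 \<le> n" and D: "Ds a n = Ds b n"
  and IJ: "I \<union> J = {..<n}" "I \<inter> J = {}" and agI: "\<forall>k\<in>I. a k = b k"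
  and dis: "\<forall>k\<in>J. \<forall>l\<in>J. a k \<noteq> b l" and Jne: "J \<noteq> {}"
  shows "n = 4 \<and> card J = 1 \<and>
     image_mset (psum b) (mset_set {P \<in> T2 n. P \<inter> J \<noteq> {}}) = repeat_mset 3 (image_mset a (mset_set J))"
proof -
  define N where "N = (n-1) choose 2"
  define TI where "TI = {P \<in> T2 n. P \<inter> J = {}}"
  define PJ where "PJ = {P \<in> T2 n. P \<inter> J \<noteq> {}}"
  have fI: "finite I" "finite J" using IJ by (metis finite_Un finite_lessThan)+
  have fT: "finite TI" "finite PJ" unfolding TI_def PJ_def by auto
  have U: "mset_set {..<n} = mset_set I + mset_set J" using IJ fI by (metis mset_set_Union)
  have T: "mset_set (T2 n) = mset_set TI + mset_set PJ"
  proof -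
    have "T2 n = TI \<union> PJ" "TI \<inter> PJ = {}" unfolding TI_def PJ_def by auto
    thus ?thesis using fT by (metis mset_set_Union)
  qed
  have psI: "psum a P = psum b P" if "P \<in> TI" for P
  proof -
    have P: "P \<in> T2 n" "P \<inter> J = {}" using that unfolding TI_def by auto
    hence fin: "finite P" "P \<noteq> {}" unfolding T2_def by (auto intro: finite_subset)
    have "P \<subseteq> I" using P IJ unfolding T2_def by auto
    hence "a (Min P) = b (Min P)" "a (Max P) = b (Max P)" using agI Min_in[OF fin] Max_in[OF fin] by auto
    thus ?thesis unfolding psum_def by simp
  qed
  have AI: "image_mset a (mset_set I) = image_mset b (mset_set I)"
    using agI fI by (intro image_mset_cong) auto
  have SI: "image_mset (psum a) (mset_set TI) = image_mset (psum b) (mset_set TI)"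
    using psI fT by (intro image_mset_cong) auto
  have eq: "repeat_mset N (image_mset a (mset_set J)) + image_mset (psum a) (mset_set PJ)
      = repeat_mset N (image_mset b (mset_set J)) + image_mset (psum b) (mset_set PJ)"
  proof -
    have "sum_mset (Ds a n) = sum_mset (Ds b n)" using D by simp
    hence "repeat_mset N (image_mset a (mset_set I)) + repeat_mset N (image_mset a (mset_set J))
       + image_mset (psum a) (mset_set TI) + image_mset (psum a) (mset_set PJ)
       = repeat_mset N (image_mset b (mset_set I)) + repeat_mset N (image_mset b (mset_set J))
       + image_mset (psum b) (mset_set TI) + image_mset (psum b) (mset_set PJ)"
      unfolding FM U T N_def by (simp add: add.assoc)
    thus ?thesis unfolding AI SI by (simp add: add.assoc)
  qed
  have sub: "repeat_mset N (image_mset a (mset_set J)) \<subseteq># image_mset (psum b) (mset_set PJ)"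
  proof (rule mset_subset_eqI)
    fix v
    have ce: "N * count (image_mset a (mset_set J)) v + count (image_mset (psum a) (mset_set PJ)) v
      = N * count (image_mset b (mset_set J)) v + count (image_mset (psum b) (mset_set PJ)) v"
      using arg_cong[OF eq, of "\<lambda>M. count M v"] by simp
    show "count (repeat_mset N (image_mset a (mset_set J))) v \<le> count (image_mset (psum b) (mset_set PJ)) v"
    proof (cases "v \<in># image_mset a (mset_set J)")
      case True
      have "v \<notin># image_mset b (mset_set J)" using True dis fI by auto
      hence "count (image_mset b (mset_set J)) v = 0" by (meson count_eq_zero_iff)
      thus ?thesis using ce by simp
    next
      case False hence "count (image_mset a (mset_set J)) v = 0" by (meson count_eq_zero_iff)
      thus ?thesis by simp
    qed
  qed
  have cPJ: "card PJ = (n choose 2) - (card I choose 2)"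
  proof -
    have "PJ = T2 n - TI" "TI \<subseteq> T2 n" unfolding PJ_def TI_def by auto
    hence "card PJ = card (T2 n) - card TI" by (simp add: card_Diff_subset fT)
    moreover have "TI = {P. P \<subseteq> I \<and> card P = 2}" unfolding TI_def T2_def using IJ by auto
    ultimately show ?thesis using n_subsets[OF fI(1), of 2] card_T2 by simp
  qed
  have cI: "card I = n - card J" using IJ fI by (metis card_Un_disjoint card_lessThan add_diff_cancel_right')
  have "size (repeat_mset N (image_mset a (mset_set J))) \<le> size (image_mset (psum b) (mset_set PJ))"
    using sub by (rule size_mset_mono)
  hence ineq: "N * card J \<le> card PJ" by simp
  have rJ: "1 \<le> card J" "card J \<le> n" using Jne fI IJ by (auto simp: Suc_le_eq card_gt_0_iff) (metis card_mono finite_lessThan Un_upper2 card_lessThan)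
  have ak: "n = 4 \<and> card J = 1"
    using arith_key[OF n4 rJ] ineq cPJ cI unfolding N_def by (simp add: mult.commute)
  have "size (repeat_mset N (image_mset a (mset_set J))) = size (image_mset (psum b) (mset_set PJ))"
    using ak cPJ cI unfolding N_def by (simp add: choose_two)
  hence "repeat_mset N (image_mset a (mset_set J)) = image_mset (psum b) (mset_set PJ)"
    using sub subset_size_eq by blast
  thus ?thesis using ak unfolding PJ_def N_def by (simp add: choose_two)
qed

end

context NS begin

lemma msplit2: fixes p q n :: nat assumes "p < n" "q < n" "p \<noteq> q"
  shows "mset_set {..<n} = add_mset p (add_mset q (mset_set ({..<n} - {p,q})))"
proof -
  have "mset_set {..<n} = add_mset p (mset_set ({..<n} - {p}))" using assms by (simp add: msplit)
  also have "mset_set ({..<n} - {p}) = add_mset q (mset_set ({..<n} - {p} - {q}))" using assms by (simp add: msplit)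
  also have "{..<n} - {p} - {q} = {..<n} - {p,q}" by auto
  finally show ?thesis .
qed

lemma F_cardS: assumes "P \<in> T2 n" shows "F (cardS a n P) = F (image_mset a (mset_set {..<n}))"
proof -
  obtain p q where pq: "P = {p,q}" "p < q" "q < n" using T2_2[OF assms] by blast
  have ms: "mset_set {..<n} = add_mset p (add_mset q (mset_set ({..<n} - {p,q})))"
    using pq by (intro msplit2) auto
  show ?thesis using pq unfolding cardS_def ms by (simp add: psum2 comm lcomm assoc)
qed

lemma ac3: assumes "add x c1 = y" "add y c2 = x" "add x c3 = y"
  shows "add x (add c1 (add c2 (add c3 z))) = y"
proof -
  have "add x (add c1 (add c2 (add c3 z))) = add (add (add x c1) c2) c3" by (simp add: assoc)
  thus ?thesis using assms by simp
qed

lemma CL: assumes n4: "4 \<le> n" and D: "Ds a n = Ds b n"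
  shows "image_mset a (mset_set {..<n}) = image_mset b (mset_set {..<n})"
proof -
  define agr where "agr \<tau> = card {k \<in> {..<n}. a k = b (\<tau> k)}" for \<tau>
  have bd: "\<forall>\<sigma>. \<sigma> permutes {..<n} \<longrightarrow> agr \<sigma> < Suc n"
  proof (intro allI impI)
    fix \<sigma> :: "nat \<Rightarrow> nat"
    have "agr \<sigma> \<le> card {..<n}" unfolding agr_def by (rule card_mono) auto
    thus "agr \<sigma> < Suc n" by simp
  qed
  obtain \<tau> where t: "\<tau> permutes {..<n}" "\<forall>\<sigma>. \<sigma> permutes {..<n} \<longrightarrow> agr \<sigma> \<le> agr \<tau>"
    using ex_has_greatest_nat[of "\<lambda>\<sigma>. \<sigma> permutes {..<n}" id agr "Suc n", OF permutes_id bd] by blast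
  define b' where "b' = b \<circ> \<tau>"
  have Db: "Ds a n = Ds b' n" using D Ds_perm[OF t(1)] unfolding b'_def by simp
  have ib: "image_mset b' (mset_set {..<n}) = image_mset b (mset_set {..<n})"
    unfolding b'_def by (rule img_perm[OF t(1)])
  define I where "I = {k \<in> {..<n}. a k = b' k}"
  define J where "J = {..<n} - I"
  have IJ: "I \<union> J = {..<n}" "I \<inter> J = {}" unfolding I_def J_def by auto
  have agI: "\<forall>k\<in>I. a k = b' k" unfolding I_def by auto
  have agrI: "agr \<tau> = card I" unfolding agr_def I_def b'_def by simp
  show ?thesis
  proof (cases "J = {}")
    case True
    hence "image_mset a (mset_set {..<n}) = image_mset b' (mset_set {..<n})"
      using IJ agI by (intro image_mset_cong) auto
    thus ?thesis using ib by simp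
  next
    case Jne: False
    have dis: "\<forall>k\<in>J. \<forall>l\<in>J. a k \<noteq> b' l"
    proof (intro ballI notI)
      fix k l assume kl: "k \<in> J" "l \<in> J" "a k = b' l"
      have kl2: "k \<noteq> l" using kl unfolding J_def I_def by auto
      have kU: "k < n" "l < n" using kl unfolding J_def by auto
      define \<sigma> where "\<sigma> = \<tau> \<circ> transpose k l"
      have sp: "\<sigma> permutes {..<n}" unfolding \<sigma>_def using permutes_compose[OF permutes_swap_id t(1)] kU by auto
      have sub: "insert k I \<subseteq> {m \<in> {..<n}. a m = b (\<sigma> m)}"
      proof
        fix m assume m: "m \<in> insert k I"
        show "m \<in> {m \<in> {..<n}. a m = b (\<sigma> m)}"
        proof (cases "m = k")
          case True thus ?thesis using kl kU unfolding \<sigma>_def b'_def by simp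
        next
          case False
          hence "m \<in> I" using m by simp
          moreover hence "m \<noteq> l" using kl IJ by auto
          ultimately show ?thesis using False unfolding \<sigma>_def I_def b'_def by (simp add: transpose_apply_other)
        qed
      qed
      have "k \<notin> I" using kl IJ by auto
      moreover have "finite I" unfolding I_def by simp
      ultimately have "card (insert k I) = Suc (card I)" by simp
      moreover have "card (insert k I) \<le> agr \<sigma>" unfolding agr_def by (rule card_mono[OF _ sub]) simp
      moreover have "agr \<sigma> \<le> agr \<tau>" using t(2) sp by blast
      ultimately show False using agrI by simp
    qed
    note K1 = key[OF n4 Db IJ agI dis Jne]
    have agI': "\<forall>k\<in>I. b' k = a k" using agI by simp
    have dis': "\<forall>k\<in>J. \<forall>l\<in>J. b' k \<noteq> a l" using dis by metis
    note K2 = key[OF n4 Db[symmetric] IJ agI' dis' Jne]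
    obtain q where q: "J = {q}" using K1 by (meson card_1_singletonE)
    have qU: "q < n" using q IJ by auto
    define x where "x = a q"
    define y where "y = b' q"
    have xy: "x \<noteq> y" using dis q unfolding x_def y_def by auto
    have ia: "image_mset a (mset_set J) = {#x#}" "image_mset b' (mset_set J) = {#y#}"
      using q unfolding x_def y_def by simp_all
    have m1: "image_mset (psum b') (mset_set {P \<in> T2 n. P \<inter> J \<noteq> {}}) = replicate_mset 3 x"
      using conjunct2[OF conjunct2[OF K1]] ia by (simp only: repeat_mset_replicate_mset)
    have m2: "image_mset (psum a) (mset_set {P \<in> T2 n. P \<inter> J \<noteq> {}}) = replicate_mset 3 y"
      using conjunct2[OF conjunct2[OF K2]] ia by (simp only: repeat_mset_replicate_mset)
    have hx: "add y (a k) = x" and hy: "add x (a k) = y" if k: "k < n" "k \<noteq> q" for k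
    proof -
      have kI: "k \<in> I" using k q IJ by auto
      have P: "{q,k} \<in> {P \<in> T2 n. P \<inter> J \<noteq> {}}" using k qU q unfolding T2_def by auto
      hence "psum b' {q,k} \<in># replicate_mset 3 x" "psum a {q,k} \<in># replicate_mset 3 y"
        unfolding m1[symmetric] m2[symmetric] by auto
      hence "psum b' {q,k} = x" "psum a {q,k} = y" by auto
      thus "add y (a k) = x" "add x (a k) = y" using k agI kI unfolding x_def y_def by (auto simp: psum2)
    qed
    have "card ({..<n} - {q}) = 3" using K1 qU by simp
    then obtain k1 k2 k3 where k: "{..<n} - {q} = {k1,k2,k3}" "k1 \<noteq> k2" "k2 \<noteq> k3" "k1 \<noteq> k3"
      by (auto simp: card_3_iff)
    have kk: "k1 < n" "k1 \<noteq> q" "k2 < n" "k2 \<noteq> q" "k3 < n" "k3 \<noteq> q" using k(1) by blast+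
    have ms: "mset_set {..<n} = add_mset q (add_mset k1 (add_mset k2 (add_mset k3 {#})))"
      using msplit[of "{..<n}" q] qU k by simp
    have ab: "b' k1 = a k1" "b' k2 = a k2" "b' k3 = a k3" using kk agI IJ q by auto
    have Sa: "F (image_mset a (mset_set {..<n})) = y"
      unfolding ms using ac3[of x "a k1" y "a k2" "a k3"] hx hy kk by (simp add: x_def)
    have Sb: "F (image_mset b' (mset_set {..<n})) = x"
      unfolding ms using ac3[of y "a k1" x "a k2" "a k3"] hx hy kk ab by (simp add: y_def)
    have T0: "{0,1} \<in> T2 n" using n4 unfolding T2_def by auto
    hence "cardS a n {0,1} \<in># Ds b' n" using Db unfolding Ds_def[of a] by (metis finite_T2 elem_mset_set image_eqI in_image_mset) 
    then obtain P where P: "P \<in> T2 n" "cardS a n {0,1} = cardS b' n P" unfolding Ds_def by auto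
    have "F (image_mset a (mset_set {..<n})) = F (image_mset b' (mset_set {..<n}))"
      using F_cardS[OF T0, of a] F_cardS[OF P(1), of b'] P(2) by simp
    thus ?thesis using Sa Sb xy by simp
  qed
qed

end

context NS begin

lemma deck_Dp: assumes "rep n f a c"
  shows "deck n f = image_mset (\<lambda>M. Phi (n-1) M c) (Dp a n)"
  unfolding deck_rep[OF assms] Dp_def image_mset.compositionality by (simp add: o_def)

lemma main_fwd: assumes n4: "4 \<le> n" and rf: "rep n f a c" and rg: "rep n g b d"
  and cond: "(c = z \<and> d = z) \<or> cancellative add" and D: "deck n f = deck n g"
  shows "fequiv n f g"
proof -
  have cc: "c = z \<or> cancellative add" "d = z \<or> cancellative add" using cond by auto
  have L: "image_mset (Psi (n-1)) (deck n f) = image_mset (\<lambda>p. (case p of (i,j) \<Rightarrow> cardP a n i j, c)) (mset_set (Pairs n))"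
    if "rep n f a c" "c = z \<or> cancellative add" for f a c
    unfolding deck_rep[OF that(1)] image_mset.compositionality
  proof (rule image_mset_cong)
    fix p assume "p \<in># mset_set (Pairs n)"
    hence "p \<in> Pairs n" by simp
    then obtain i j where p: "p = (i,j)" "i < j" "j < n" by (auto simp: Pairs_def)
    show "(Psi (n - 1) \<circ> (\<lambda>p. Phi (n - 1) (case p of (i, j) \<Rightarrow> cardP a n i j) c)) p =
         (case p of (i, j) \<Rightarrow> cardP a n i j, c)"
      using Psi_Phi[OF size_cardP[OF p(2,3)] that(2)] p(1) by simp
  qed
  have E: "image_mset (\<lambda>p. (case p of (i,j) \<Rightarrow> cardP a n i j, c)) (mset_set (Pairs n))
      = image_mset (\<lambda>p. (case p of (i,j) \<Rightarrow> cardP b n i j, d)) (mset_set (Pairs n))"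
    using L[OF rf cc(1)] L[OF rg cc(2)] D by simp
  have "image_mset fst (image_mset (\<lambda>p. (case p of (i,j) \<Rightarrow> cardP a n i j, c)) (mset_set (Pairs n)))
      = image_mset fst (image_mset (\<lambda>p. (case p of (i,j) \<Rightarrow> cardP b n i j, d)) (mset_set (Pairs n)))"
    using E by simp
  hence "Dp a n = Dp b n" unfolding Dp_def image_mset.compositionality by (simp add: o_def)
  hence "Ds a n = Ds b n" by (simp add: Dp_Ds)
  hence im: "image_mset a (mset_set {..<n}) = image_mset b (mset_set {..<n})" using CL[OF n4] by blast
  have "(0,1) \<in> Pairs n" using n4 by (simp add: Pairs_def)
  hence "(cardP a n 0 1, c) \<in># image_mset (\<lambda>p. (case p of (i,j) \<Rightarrow> cardP b n i j, d)) (mset_set (Pairs n))"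
    unfolding E[symmetric] by (metis (no_types, lifting) finite_Pairs elem_mset_set image_eqI in_image_mset case_prod_conv)
  hence cd: "c = d" by auto
  show ?thesis using E2[OF rf _ im] rg cd by simp
qed

lemma main_bwd: assumes rf: "rep n f a c" and rg: "rep n g b d" and Q: "fequiv n f g"
  shows "deck n f = deck n g"
proof -
  obtain \<sigma> where s: "\<sigma> permutes {..<n}" "rep n f (b \<circ> inv \<sigma>) d" using E1[OF Q rg] by blast
  have "deck n f = image_mset (\<lambda>M. Phi (n-1) M d) (Ds (b \<circ> inv \<sigma>) n)"
    using deck_Dp[OF s(2)] by (simp add: Dp_Ds)
  also have "\<dots> = image_mset (\<lambda>M. Phi (n-1) M d) (Ds b n)"
    using Ds_perm[OF permutes_inv[OF s(1)]] by simp
  also have "\<dots> = deck n g" using deck_Dp[OF rg] by (simp add: Dp_Ds)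
  finally show ?thesis .
qed

end

theorem mainTheorem12:
  fixes add mul :: "'a \<Rightarrow> 'a \<Rightarrow> 'a" and z e :: 'a
    and n :: nat and f g :: "'a list \<Rightarrow> 'a"
  assumes "nars add mul z e"
    and "n \<ge> 4"
    and "affine add mul z n f" and "affine add mul z n g"
    and "(linear_fun add mul z n f \<and> linear_fun add mul z n g) \<or> cancellative add"
  shows "deck n f = deck n g \<longleftrightarrow> fequiv n f g"
proof -
  interpret NS add mul z e using assms(1) by unfold_locales
  have "\<exists>a c b d. rep n f a c \<and> rep n g b d \<and> ((c = z \<and> d = z) \<or> cancellative add)"
  proof (cases "cancellative add")
    case True thus ?thesis using assms(3,4) unfolding affine_rep by blast
  next
    case False thus ?thesis using assms(5) unfolding linear_rep by blast
  qed
  then obtain a c b d where r: "rep n f a c" "rep n g b d" "(c = z \<and> d = z) \<or> cancellative add" by blast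
  show ?thesis using main_fwd[OF assms(2) r] main_bwd[OF r(1,2)] by blast
qed


end
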